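(* Let $\mathbb{F}$ be an algebraically closed field of characteristic zero. For any $f\in S_{3,3}$, the set $P_{3,3}\setminus\{f\}$ is not a separating set for $\mathcal{O}(\mathcal{N}_3^3)^{GL_3}$. In particular, no proper subset of $S_{3,3}$ is a separating set for $\mathcal{O}(\mathcal{N}_3^3)^{GL_3}$.
   Context: $\mathcal{N}_3^3$ is the set of triples $\underline{A}=(A_1,A_2,A_3)$ of nilpotent $3\times3$ matrices over $\mathbb{F}$, with $GL_3$ acting by simultaneous conjugation; $\mathcal{O}(\mathcal{N}_3^3)^{GL_3}$ is the algebra of $GL_3$-invariant polynomial functions on $\mathcal{N}_3^3$. $\mathrm{tr}(Y_{i_1}\cdots Y_{i_r})$ denotes the invariant $\underline{A}\mapsto\mathrm{tr}(A_{i_1}\cdots A_{i_r})$. $S_{3,3}$ is the set consisting of: $\mathrm{tr}(Y_iY_j),\ \mathrm{tr}(Y_i^2Y_j),\ \mathrm{tr}(Y_iY_j^2),\ \mathrm{tr}(Y_i^2Y_j^2),\ \mathrm{tr}(Y_i^2Y_j^2Y_iY_j)$ for $1\le i<j\le3$; $\mathrm{tr}(Y_1Y_2Y_3)$, $\mathrm{tr}(Y_1Y_3Y_2)$; $\mathrm{tr}(Y_i^2Y_jY_k)$ for $\{i,j,k\}=\{1,2,3\}$; $\mathrm{tr}(Y_1^2Y_2Y_1Y_3)$, $\mathrm{tr}(Y_2^2Y_1Y_2Y_3)$, $\mathrm{tr}(Y_3^2Y_1Y_3Y_2)$. $P_{3,3}=S_{3,3}\sqcup P'_{3,3}$, where $P'_{3,3}$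 consists of $\mathrm{tr}(Y_i^2Y_j^2Y_k)$ and $\mathrm{tr}(Y_i^2Y_j^2Y_iY_k)$ for $\{i,j,k\}=\{1,2,3\}$, and $\mathrm{tr}(Y_1^2Y_2^2Y_3^2)$. Two points $u,v$ are separated by a subset $S$ if some $f\in S$ has $f(u)\ne f(v)$, and separated if separated by the whole invariant algebra; $S$ is separating if all separated pairs are separated by $S$. *)

theory Defs
  imports "HOL-Analysis.Analysis" "HOL-Computational_Algebra.Polynomial"
begin

type_synonym 'a mat3 = "'a^3^3"
type_synonym 'a triple = "'a mat3 \<times> 'a mat3 \<times> 'a mat3"

definition comp :: "nat \<Rightarrow> ('a::semiring_1) triple \<Rightarrow> 'a mat3" where
  "comp k A = (if k = 1 then fst A else if k = 2 then fst (snd A) else snd (snd A))"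

fun mpow :: "('a::semiring_1) mat3 \<Rightarrow> nat \<Rightarrow> 'a mat3" where
  "mpow M 0 = mat 1"
| "mpow M (Suc n) = M ** mpow M n"

definition nilpotent_mat :: "('a::semiring_1) mat3 \<Rightarrow> bool" where
  "nilpotent_mat M \<longleftrightarrow> (\<exists>k. mpow M k = 0)"

definition N33 :: "('a::semiring_1) triple set" where
  "N33 = {A. nilpotent_mat (comp 1 A) \<and> nilpotent_mat (comp 2 A) \<and> nilpotent_mat (comp 3 A)}"

inductive_set polyfun :: "(('a::comm_ring_1) triple \<Rightarrow> 'a) set" where
  const: "(\<lambda>A. c) \<in> polyfun"
| coord: "k \<in> {1,2,3} \<Longrightarrow> (\<lambda>A. comp k A $ i $ j) \<in> polyfun"
| add: "f \<in> polyfun \<Longrightarrow> g \<in> polyfun \<Longrightarrow> (\<lambda>A. f A + g A) \<in> polyfun"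
| mult: "f \<in> polyfun \<Longrightarrow> g \<in> polyfun \<Longrightarrow> (\<lambda>A. f A * g A) \<in> polyfun"

definition conj_triple :: "('a::field) mat3 \<Rightarrow> 'a triple \<Rightarrow> 'a triple" where
  "conj_triple g A = (g ** fst A ** matrix_inv g,
                      g ** fst (snd A) ** matrix_inv g,
                      g ** snd (snd A) ** matrix_inv g)"

text \<open>GL_3-invariant regular functions on N_3^3: restrictions to N_3^3 of polynomial
  functions, invariant on N_3^3 under simultaneous conjugation.\<close>
definition invariant_on_N :: "(('a::field) triple \<Rightarrow> 'a) \<Rightarrow> bool" where
  "invariant_on_N f \<longleftrightarrow> f \<in> polyfun \<and>
     (\<forall>g A. invertible g \<and> A \<in> N33 \<longrightarrow> f (conj_triple g A) = f A)"

definition separated :: "('a::field) triple \<Rightarrow> 'a triple \<Rightarrow> bool" where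
  "separated u v \<longleftrightarrow> (\<exists>f. invariant_on_N f \<and> f u \<noteq> f v)"

text \<open>tr(Y_{i_1} ... Y_{i_r}) indexed by the word [i_1,...,i_r].\<close>
definition trw :: "nat list \<Rightarrow> ('a::comm_ring_1) triple \<Rightarrow> 'a" where
  "trw w A = trace (foldr (\<lambda>i M. comp i A ** M) w (mat 1))"

definition separated_by :: "nat list set \<Rightarrow> ('a::field) triple \<Rightarrow> 'a triple \<Rightarrow> bool" where
  "separated_by W u v \<longleftrightarrow> (\<exists>w\<in>W. trw w u \<noteq> (trw w v :: 'a))"

definition separating :: "('a::field) itself \<Rightarrow> nat list set \<Rightarrow> bool" where
  "separating _ W \<longleftrightarrow> (\<forall>u \<in> (N33 :: 'a triple set). \<forall>v \<in> N33.
       separated u v \<longrightarrow> separated_by W u v)"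

definition S33 :: "nat list set" where
  "S33 =
     {[i,j] | i j. 1 \<le> i \<and> i < j \<and> j \<le> 3}
   \<union> {[i,i,j] | i j. 1 \<le> i \<and> i < j \<and> j \<le> 3}
   \<union> {[i,j,j] | i j. 1 \<le> i \<and> i < j \<and> j \<le> 3}
   \<union> {[i,i,j,j] | i j. 1 \<le> i \<and> i < j \<and> j \<le> 3}
   \<union> {[i,i,j,j,i,j] | i j. 1 \<le> i \<and> i < j \<and> j \<le> 3}
   \<union> {[1,2,3], [1,3,2]}
   \<union> {[i,i,j,k] | i j k. {i,j,k} = {1,2,3::nat}}
   \<union> {[1,1,2,1,3], [2,2,1,2,3], [3,3,1,3,2]}"

definition P33' :: "nat list set" where
  "P33' =
     {[i,i,j,j,k] | i j k. {i,j,k} = {1,2,3::nat}}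
   \<union> {[i,i,j,j,i,k] | i j k. {i,j,k} = {1,2,3::nat}}
   \<union> {[1,1,2,2,3,3]}"

definition P33 :: "nat list set" where
  "P33 = S33 \<union> P33'"

end

theory Submission imports Defs begin

definition M3 :: "'a::zero \<Rightarrow> 'a \<Rightarrow> 'a \<Rightarrow> 'a \<Rightarrow> 'a \<Rightarrow> 'a \<Rightarrow> 'a \<Rightarrow> 'a \<Rightarrow> 'a \<Rightarrow> 'a^3^3" where
  "M3 a b c d e f g h i = vector [vector [a,b,c], vector [d,e,f], vector [g,h,i]]"

lemma M3_mult:
  "(M3 a b c d e f g h i :: 'a::semiring_1^3^3) ** M3 a' b' c' d' e' f' g' h' i' =
   M3 (a*a'+b*d'+c*g') (a*b'+b*e'+c*h') (a*c'+b*f'+c*i')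
      (d*a'+e*d'+f*g') (d*b'+e*e'+f*h') (d*c'+e*f'+f*i')
      (g*a'+h*d'+i*g') (g*b'+h*e'+i*h') (g*c'+h*f'+i*i')"
  unfolding M3_def matrix_matrix_mult_def
  by (simp add: vec_eq_iff forall_3 sum_3)

lemma M3_one: "(mat 1 :: 'a::semiring_1^3^3) = M3 1 0 0 0 1 0 0 0 1"
  unfolding M3_def by (simp add: vec_eq_iff forall_3 mat_def)

lemma M3_zero: "(0 :: 'a::semiring_1^3^3) = M3 0 0 0 0 0 0 0 0 0"
  unfolding M3_def by (simp add: vec_eq_iff forall_3)

lemma M3_trace: "trace (M3 a b c d e f g h i :: 'a::semiring_1^3^3) = a + e + i"
  unfolding M3_def trace_def by (simp add: sum_3)

lemma M3_eq: "(M3 a b c d e f g h i = M3 a' b' c' d' e' f' g' h' i') \<longleftrightarrow>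
   a=a' \<and> b=b' \<and> c=c' \<and> d=d' \<and> e=e' \<and> f=f' \<and> g=g' \<and> h=h' \<and> i=i'"
  unfolding M3_def by (simp add: vec_eq_iff forall_3)

lemma comp_simps: "comp (Suc 0) (A,B,C) = A" "comp 1 (A,B,C) = A" "comp 2 (A,B,C) = B" "comp 3 (A,B,C) = C"
  by (simp_all add: comp_def)

lemma trw_simps: "trw w A = trace (foldr (\<lambda>i M. comp i A ** M) w (mat 1))" by (simp add: trw_def)

lemma nil3: "mpow M 3 = M ** (M ** (M ** mat 1))" by (simp add: numeral_3_eq_3)

lemma inv_props:
  assumes "invertible (g::'a::field mat3)"
  shows "g ** matrix_inv g = mat 1" "matrix_inv g ** g = mat 1"
proof -
  have "\<exists>A'. g ** A' = mat 1 \<and> A' ** g = mat 1" using assms unfolding invertible_def by blast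
  hence "g ** matrix_inv g = mat 1 \<and> matrix_inv g ** g = mat 1"
    unfolding matrix_inv_def by (rule someI_ex)
  thus "g ** matrix_inv g = mat 1" "matrix_inv g ** g = mat 1" by auto
qed

lemma conj_comp: "comp k (conj_triple g A) = g ** comp k A ** matrix_inv g"
  by (simp add: comp_def conj_triple_def)

lemma foldr_conj:
  assumes "invertible (g::'a::field mat3)"
  shows "foldr (\<lambda>i M. comp i (conj_triple g A) ** M) w (mat 1)
         = g ** foldr (\<lambda>i M. comp i A ** M) w (mat 1) ** matrix_inv g"
proof (induction w)
  case Nil
  then show ?case using inv_props[OF assms] by (simp add: matrix_mul_rid)
next
  case (Cons a w)
  have "g ** comp a A ** matrix_inv g ** (g ** foldr (\<lambda>i M. comp i A ** M) w (mat 1) ** matrix_inv g)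
      = g ** comp a A ** (matrix_inv g ** g) ** foldr (\<lambda>i M. comp i A ** M) w (mat 1) ** matrix_inv g"
    by (simp add: matrix_mul_assoc)
  also have "\<dots> = g ** (comp a A ** foldr (\<lambda>i M. comp i A ** M) w (mat 1)) ** matrix_inv g"
    using inv_props[OF assms] by (simp add: matrix_mul_assoc matrix_mul_rid)
  finally show ?case using Cons by (simp add: conj_comp)
qed

lemma trw_conj:
  assumes "invertible (g::'a::field mat3)"
  shows "trw w (conj_triple g A) = trw w A"
proof -
  have "trw w (conj_triple g A) = trace (g ** (foldr (\<lambda>i M. comp i A ** M) w (mat 1) ** matrix_inv g))"
    unfolding trw_def foldr_conj[OF assms] by (simp add: matrix_mul_assoc)
  also have "\<dots> = trace ((foldr (\<lambda>i M. comp i A ** M) w (mat 1) ** matrix_inv g) ** g)"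
    by (rule trace_mul_sym)
  also have "\<dots> = trw w A"
    using inv_props[OF assms] by (simp add: matrix_mul_assoc[symmetric] matrix_mul_rid trw_def)
  finally show ?thesis .
qed

lemma polyfun_sum:
  assumes "finite S" shows "(\<forall>x\<in>S. f x \<in> polyfun) \<Longrightarrow> (\<lambda>A. \<Sum>x\<in>S. f x A) \<in> polyfun"
  using assms
proof (induction S rule: finite_induct)
  case empty
  then show ?case using polyfun.const[of 0] by simp
next
  case (insert x F)
  then show ?case using polyfun.add[of "f x" "\<lambda>A. \<Sum>x\<in>F. f x A"] by simp
qed

lemma polyfun_comp: "(\<lambda>A. comp k A $ i $ j) \<in> polyfun"
proof (cases "k \<in> {1,2,3}")
  case True then show ?thesis by (rule polyfun.coord)
next
  case False
  hence eq: "(\<lambda>A. comp k A $ i $ j) = (\<lambda>A. comp 3 A $ i $ j)" by (auto simp: comp_def)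
  show ?thesis unfolding eq by (rule polyfun.coord) simp
qed

lemma polyfun_foldr: "\<forall>i j. (\<lambda>A::'a::comm_ring_1 triple. foldr (\<lambda>i M. comp i A ** M) w (mat 1) $ i $ j) \<in> polyfun"
proof (induction w)
  case Nil
  show ?case
  proof (intro allI)
    fix i j :: 3
    show "(\<lambda>A::'a triple. foldr (\<lambda>i M. comp i A ** M) [] (mat 1) $ i $ j) \<in> polyfun"
      using polyfun.const[of "if i = j then 1 else 0"] by (simp add: mat_def)
  qed
next
  case (Cons a w)
  show ?case
  proof (intro allI)
    fix i j :: 3
    have "(\<lambda>A::'a triple. foldr (\<lambda>i M. comp i A ** M) (a # w) (mat 1) $ i $ j)
        = (\<lambda>A. \<Sum>t\<in>UNIV. comp a A $ i $ t * foldr (\<lambda>i M. comp i A ** M) w (mat 1) $ t $ j)"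
      by (simp add: matrix_matrix_mult_def)
    also have "\<dots> \<in> polyfun"
    proof (rule polyfun_sum)
      show "\<forall>t\<in>UNIV. (\<lambda>A::'a triple. comp a A $ i $ t * foldr (\<lambda>i M. comp i A ** M) w (mat 1) $ t $ j) \<in> polyfun"
      proof
        fix t :: 3
        have h: "(\<lambda>A::'a triple. foldr (\<lambda>i M. comp i A ** M) w (mat 1) $ t $ j) \<in> polyfun"
          using Cons.IH by blast
        show "(\<lambda>A::'a triple. comp a A $ i $ t * foldr (\<lambda>i M. comp i A ** M) w (mat 1) $ t $ j) \<in> polyfun"
          by (rule polyfun.mult[OF polyfun_comp h])
      qed
    qed simp
    finally show "(\<lambda>A::'a triple. foldr (\<lambda>i M. comp i A ** M) (a # w) (mat 1) $ i $ j) \<in> polyfun" .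
  qed
qed

lemma trw_polyfun: "trw w \<in> polyfun"
proof -
  have "trw w = (\<lambda>A. \<Sum>i\<in>UNIV. foldr (\<lambda>i M. comp i A ** M) w (mat 1) $ i $ i)"
    by (simp add: trw_def trace_def fun_eq_iff)
  also have "\<dots> \<in> polyfun" by (rule polyfun_sum) (use polyfun_foldr in auto)
  finally show ?thesis .
qed

lemma trw_invariant: "invariant_on_N (trw w :: 'a::field triple \<Rightarrow> 'a)"
  unfolding invariant_on_N_def using trw_polyfun trw_conj by blast


lemma not_sep:
  fixes u v :: "'a::field triple"
  assumes "u \<in> N33" "v \<in> N33" "trw w u \<noteq> trw w v" "\<forall>g\<in>W - {w}. trw g u = trw g v"
  shows "\<not> separating TYPE('a) (W - {w})"
proof -
  have "separated u v" unfolding separated_def using trw_invariant assms(3) by blast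
  moreover have "\<not> separated_by (W - {w}) u v" unfolding separated_by_def using assms(4) by blast
  ultimately show ?thesis unfolding separating_def using assms(1,2) by blast
qed

lemma separating_mono:
  assumes "separating TYPE('a::field) W" "W \<subseteq> W'" shows "separating TYPE('a) W'"
  using assms unfolding separating_def separated_by_def by blast


lemma perm3D: assumes h: "{i,j,k} = {1,2,3::nat}"
  shows "(i=1\<and>j=2\<and>k=3) \<or> (i=1\<and>j=3\<and>k=2) \<or> (i=2\<and>j=1\<and>k=3) \<or> (i=2\<and>j=3\<and>k=1) \<or> (i=3\<and>j=1\<and>k=2) \<or> (i=3\<and>j=2\<and>k=1)"
proof -
  have a: "i = 1 \<or> i = 2 \<or> i = 3" "j = 1 \<or> j = 2 \<or> j = 3" "k = 1 \<or> k = 2 \<or> k = 3"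
    using h[symmetric] by (metis insertCI insertE empty_iff)+
  have b: "1 \<in> {i,j,k}" "2 \<in> {i,j,k}" "3 \<in> {i,j,k}" unfolding h by simp_all
  from a show ?thesis
    by (elim disjE; insert b; simp)
qed

lemma pair3: "(1 \<le> i \<and> i < j \<and> j \<le> (3::nat)) \<longleftrightarrow> (i=1\<and>j=2) \<or> (i=1\<and>j=3) \<or> (i=2\<and>j=3)"
  by auto

definition S33L :: "nat list list" where
  "S33L = [[1,2], [1,3], [2,3], [1,1,2], [1,1,3], [2,2,3], [1,2,2], [1,3,3], [2,3,3], [1,1,2,2], [1,1,3,3], [2,2,3,3], [1,1,2,2,1,2], [1,1,3,3,1,3], [2,2,3,3,2,3], [1,2,3], [1,3,2], [1,1,2,3], [1,1,3,2], [2,2,1,3], [2,2,3,1], [3,3,1,2], [3,3,2,1], [1,1,2,1,3], [2,2,1,2,3], [3,3,1,3,2]]"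
definition P33L' :: "nat list list" where
  "P33L' = [[1,1,2,2,3], [1,1,3,3,2], [2,2,1,1,3], [2,2,3,3,1], [3,3,1,1,2], [3,3,2,2,1], [1,1,2,2,1,3], [1,1,3,3,1,2], [2,2,1,1,2,3], [2,2,3,3,2,1], [3,3,1,1,3,2], [3,3,2,2,3,1], [1,1,2,2,3,3]]"

lemma c1: "{[i,j] | i j. 1 \<le> i \<and> i < j \<and> j \<le> (3::nat)} \<subseteq> set S33L"
proof
  fix x assume "x \<in> {[i,j] | i j. 1 \<le> i \<and> i < j \<and> j \<le> (3::nat)}"
  then obtain i j where x: "x = [i,j]" and c: "(i=1\<and>j=2) \<or> (i=1\<and>j=3) \<or> (i=2\<and>j=3)" unfolding pair3 by blast
  from c show "x \<in> set S33L" unfolding x S33L_def by (elim disjE conjE; simp)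
qed

lemma c2: "{[i,i,j] | i j. 1 \<le> i \<and> i < j \<and> j \<le> (3::nat)} \<subseteq> set S33L"
proof
  fix x assume "x \<in> {[i,i,j] | i j. 1 \<le> i \<and> i < j \<and> j \<le> (3::nat)}"
  then obtain i j where x: "x = [i,i,j]" and c: "(i=1\<and>j=2) \<or> (i=1\<and>j=3) \<or> (i=2\<and>j=3)" unfolding pair3 by blast
  from c show "x \<in> set S33L" unfolding x S33L_def by (elim disjE conjE; simp)
qed

lemma c3: "{[i,j,j] | i j. 1 \<le> i \<and> i < j \<and> j \<le> (3::nat)} \<subseteq> set S33L"
proof
  fix x assume "x \<in> {[i,j,j] | i j. 1 \<le> i \<and> i < j \<and> j \<le> (3::nat)}"
  then obtain i j where x: "x = [i,j,j]" and c: "(i=1\<and>j=2) \<or> (i=1\<and>j=3) \<or> (i=2\<and>j=3)" unfolding pair3 by blast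
  from c show "x \<in> set S33L" unfolding x S33L_def by (elim disjE conjE; simp)
qed

lemma c4: "{[i,i,j,j] | i j. 1 \<le> i \<and> i < j \<and> j \<le> (3::nat)} \<subseteq> set S33L"
proof
  fix x assume "x \<in> {[i,i,j,j] | i j. 1 \<le> i \<and> i < j \<and> j \<le> (3::nat)}"
  then obtain i j where x: "x = [i,i,j,j]" and c: "(i=1\<and>j=2) \<or> (i=1\<and>j=3) \<or> (i=2\<and>j=3)" unfolding pair3 by blast
  from c show "x \<in> set S33L" unfolding x S33L_def by (elim disjE conjE; simp)
qed

lemma c5: "{[i,i,j,j,i,j] | i j. 1 \<le> i \<and> i < j \<and> j \<le> (3::nat)} \<subseteq> set S33L"
proof
  fix x assume "x \<in> {[i,i,j,j,i,j] | i j. 1 \<le> i \<and> i < j \<and> j \<le> (3::nat)}"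
  then obtain i j where x: "x = [i,i,j,j,i,j]" and c: "(i=1\<and>j=2) \<or> (i=1\<and>j=3) \<or> (i=2\<and>j=3)" unfolding pair3 by blast
  from c show "x \<in> set S33L" unfolding x S33L_def by (elim disjE conjE; simp)
qed

lemma c6: "{[i,i,j,k] | i j k. {i,j,k} = {1,2,3::nat}} \<subseteq> set S33L"
proof
  fix x assume "x \<in> {[i,i,j,k] | i j k. {i,j,k} = {1,2,3::nat}}"
  then obtain i j k where x: "x = [i,i,j,k]" and h: "{i,j,k} = {1,2,3::nat}" by blast
  from perm3D[OF h] show "x \<in> set S33L" unfolding x S33L_def by (elim disjE conjE; simp)
qed

lemma c7: "{[i,i,j,j,k] | i j k. {i,j,k} = {1,2,3::nat}} \<subseteq> set P33L'"
proof
  fix x assume "x \<in> {[i,i,j,j,k] | i j k. {i,j,k} = {1,2,3::nat}}"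
  then obtain i j k where x: "x = [i,i,j,j,k]" and h: "{i,j,k} = {1,2,3::nat}" by blast
  from perm3D[OF h] show "x \<in> set P33L'" unfolding x P33L'_def by (elim disjE conjE; simp)
qed

lemma c8: "{[i,i,j,j,i,k] | i j k. {i,j,k} = {1,2,3::nat}} \<subseteq> set P33L'"
proof
  fix x assume "x \<in> {[i,i,j,j,i,k] | i j k. {i,j,k} = {1,2,3::nat}}"
  then obtain i j k where x: "x = [i,i,j,j,i,k]" and h: "{i,j,k} = {1,2,3::nat}" by blast
  from perm3D[OF h] show "x \<in> set P33L'" unfolding x P33L'_def by (elim disjE conjE; simp)
qed

lemma S33_sub: "S33 \<subseteq> set S33L"
  unfolding S33_def by (intro Un_least c1 c2 c3 c4 c5 c6) (simp_all add: S33L_def)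

lemma P33_sub: "P33 \<subseteq> set (S33L @ P33L')"
  unfolding P33_def P33'_def set_append
  by (intro Un_least c7 c8 S33_sub[THEN subset_trans] Un_upper1 c7[THEN subset_trans] c8[THEN subset_trans] Un_upper2) (simp add: P33L'_def)

lemma not_sep_L:
  fixes u v :: "'a::field triple"
  assumes "mpow (comp 1 u) 3 = 0" "mpow (comp 2 u) 3 = 0" "mpow (comp 3 u) 3 = 0"
    "mpow (comp 1 v) 3 = 0" "mpow (comp 2 v) 3 = 0" "mpow (comp 3 v) 3 = 0"
    "trw w u \<noteq> trw w v"
    "list_all (\<lambda>g. g = w \<or> trw g u = trw g v) (S33L @ P33L')"
  shows "\<not> separating TYPE('a) (P33 - {w})"
proof (rule not_sep)
  show "u \<in> N33" "v \<in> N33" unfolding N33_def nilpotent_mat_def using assms(1-6) by blast+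
  show "trw w u \<noteq> trw w v" by fact
  show "\<forall>g\<in>P33 - {w}. trw g u = trw g v"
  proof
    fix g assume "g \<in> P33 - {w}"
    hence "g \<in> set (S33L @ P33L')" "g \<noteq> w" using P33_sub by auto
    thus "trw g u = trw g v" using assms(8) by (auto simp: list_all_iff)
  qed
qed

lemmas evsimps = comp_simps nil3 M3_mult M3_one M3_zero M3_eq M3_trace trw_def S33L_def P33L'_def

lemma case0: "\<not> separating TYPE('a::field_char_0) (P33 - {[1,2]})"
  by (rule not_sep_L[where u="((M3 0 1 0 0 0 1 0 0 0), (M3 0 0 0 0 0 0 1 0 0), (M3 0 0 0 1 0 1 0 0 0)) :: 'a triple" and v="((M3 0 1 0 0 0 1 0 0 0), (M3 0 0 0 (-1) 0 0 1 0 0), (M3 0 0 0 1 0 1 0 0 0))"]) (simp_all add: evsimps)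

lemma case1: "\<not> separating TYPE('a::field_char_0) (P33 - {[1,3]})"
  by (rule not_sep_L[where u="((M3 0 1 0 0 0 1 0 0 0), (M3 0 (-1) 0 0 0 0 (-1) (-1) 0), (M3 0 0 0 0 0 0 0 0 0)) :: 'a triple" and v="((M3 0 1 0 0 0 1 0 0 0), (M3 0 (-1) 0 0 0 0 (-1) (-1) 0), (M3 0 0 0 0 0 0 0 (-1) 0))"]) (simp_all add: evsimps)

lemma case2: "\<not> separating TYPE('a::field_char_0) (P33 - {[2,3]})"
  by (rule not_sep_L[where u="((M3 0 1 0 0 0 1 0 0 0), (M3 0 0 0 0 0 0 0 1 0), (M3 0 0 0 1 0 1 0 0 0)) :: 'a triple" and v="((M3 0 1 0 0 0 1 0 0 0), (M3 0 (-1) 0 0 0 0 0 1 0), (M3 0 0 0 1 0 1 0 0 0))"]) (simp_all add: evsimps)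

lemma case3: "\<not> separating TYPE('a::field_char_0) (P33 - {[1,1,2]})"
  by (rule not_sep_L[where u="((M3 0 0 0 0 0 0 0 1 0), (M3 0 0 0 (-1) 0 (-1) 0 0 0), (M3 0 1 0 0 0 1 0 0 0)) :: 'a triple" and v="((M3 0 0 (-1) 0 0 0 0 1 0), (M3 0 0 0 (-1) 0 (-1) 0 0 0), (M3 0 1 0 0 0 1 0 0 0))"]) (simp_all add: evsimps)

lemma case4: "\<not> separating TYPE('a::field_char_0) (P33 - {[1,1,3]})"
  by (rule not_sep_L[where u="((M3 0 1 0 0 0 1 0 0 0), (M3 0 0 0 0 0 (-1) 0 0 0), (M3 0 0 0 (-1) 0 1 (-1) 0 0)) :: 'a triple" and v="((M3 0 1 0 0 0 1 0 0 0), (M3 0 0 0 0 0 1 0 0 0), (M3 0 0 0 (-1) 0 (-1) 1 0 0))"]) (simp_all add: evsimps)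

lemma case5: "\<not> separating TYPE('a::field_char_0) (P33 - {[2,2,3]})"
  by (rule not_sep_L[where u="((M3 0 0 0 0 0 (-1) 0 0 0), (M3 0 1 0 0 0 1 0 0 0), (M3 0 0 0 (-1) 0 1 (-1) 0 0)) :: 'a triple" and v="((M3 0 0 0 0 0 1 0 0 0), (M3 0 1 0 0 0 1 0 0 0), (M3 0 0 0 (-1) 0 (-1) 1 0 0))"]) (simp_all add: evsimps)

lemma case6: "\<not> separating TYPE('a::field_char_0) (P33 - {[1,2,2]})"
  by (rule not_sep_L[where u="((M3 0 1 0 0 0 1 0 0 0), (M3 0 0 0 0 0 0 1 0 0), (M3 0 0 0 (-1) 0 (-1) 0 0 0)) :: 'a triple" and v="((M3 0 1 0 0 0 1 0 0 0), (M3 0 0 0 0 0 (-1) 1 0 0), (M3 0 0 0 (-1) 0 (-1) 0 0 0))"]) (simp_all add: evsimps)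

lemma case7: "\<not> separating TYPE('a::field_char_0) (P33 - {[1,3,3]})"
  by (rule not_sep_L[where u="((M3 0 0 0 0 0 0 (-1) 1 0), (M3 0 (-1) 0 0 0 0 0 (-1) 0), (M3 0 1 0 0 0 1 0 0 0)) :: 'a triple" and v="((M3 0 0 0 0 0 0 1 1 0), (M3 0 1 0 0 0 0 0 (-1) 0), (M3 0 1 0 0 0 1 0 0 0))"]) (simp_all add: evsimps)

lemma case8: "\<not> separating TYPE('a::field_char_0) (P33 - {[2,3,3]})"
  by (rule not_sep_L[where u="((M3 0 1 0 0 0 1 0 0 0), (M3 0 0 0 0 0 0 0 1 0), (M3 0 0 0 (-1) 0 (-1) 0 0 0)) :: 'a triple" and v="((M3 0 1 0 0 0 1 0 0 0), (M3 0 0 0 0 0 0 0 1 0), (M3 0 0 (-1) (-1) 0 (-1) 0 0 0))"]) (simp_all add: evsimps)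

lemma case9: "\<not> separating TYPE('a::field_char_0) (P33 - {[1,1,2,2]})"
  by (rule not_sep_L[where u="((M3 0 1 0 0 0 1 0 0 0), (M3 (-1) (-1) 0 1 1 0 (-1) 0 0), (M3 0 0 0 0 0 0 0 0 0)) :: 'a triple" and v="((M3 0 1 0 0 0 1 0 0 0), (M3 0 0 0 0 (-1) (-1) (-1) 1 1), (M3 0 0 0 0 0 0 0 0 0))"]) (simp_all add: evsimps)

lemma case10: "\<not> separating TYPE('a::field_char_0) (P33 - {[1,1,3,3]})"
  by (rule not_sep_L[where u="((M3 0 1 0 0 0 1 0 0 0), (M3 0 0 0 0 0 0 0 0 0), (M3 (-1) (-1) 0 1 1 0 (-1) 0 0)) :: 'a triple" and v="((M3 0 1 0 0 0 1 0 0 0), (M3 0 0 0 0 0 0 0 0 0), (M3 0 0 0 0 (-1) (-1) (-1) 1 1))"]) (simp_all add: evsimps)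

lemma case11: "\<not> separating TYPE('a::field_char_0) (P33 - {[2,2,3,3]})"
  by (rule not_sep_L[where u="((M3 0 0 0 0 0 0 0 0 0), (M3 0 1 0 0 0 1 0 0 0), (M3 (-1) (-1) 0 1 1 0 (-1) 0 0)) :: 'a triple" and v="((M3 0 0 0 0 0 0 0 0 0), (M3 0 1 0 0 0 1 0 0 0), (M3 0 0 0 0 (-1) (-1) (-1) 1 1))"]) (simp_all add: evsimps)

lemma case12: "\<not> separating TYPE('a::field_char_0) (P33 - {[1,1,2,2,1,2]})"
  by (rule not_sep_L[where u="((M3 0 1 0 0 0 1 0 0 0), (M3 0 (-1) 0 0 0 0 (-1) (-1) 0), (M3 0 0 0 0 0 0 0 0 0)) :: 'a triple" and v="((M3 0 1 0 0 0 1 0 0 0), (M3 (-1) 0 1 (-1) 0 0 (-1) 0 1), (M3 0 0 0 0 0 0 0 0 0))"]) (simp_all add: evsimps)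

lemma case13: "\<not> separating TYPE('a::field_char_0) (P33 - {[1,1,3,3,1,3]})"
  by (rule not_sep_L[where u="((M3 0 1 0 0 0 1 0 0 0), (M3 0 0 0 0 0 0 0 0 0), (M3 0 (-1) 0 0 0 0 (-1) (-1) 0)) :: 'a triple" and v="((M3 0 1 0 0 0 1 0 0 0), (M3 0 0 0 0 0 0 0 0 0), (M3 (-1) 0 1 (-1) 0 0 (-1) 0 1))"]) (simp_all add: evsimps)

lemma case14: "\<not> separating TYPE('a::field_char_0) (P33 - {[2,2,3,3,2,3]})"
  by (rule not_sep_L[where u="((M3 0 0 0 0 0 0 0 0 0), (M3 0 1 0 0 0 1 0 0 0), (M3 0 (-1) 0 0 0 0 (-1) (-1) 0)) :: 'a triple" and v="((M3 0 0 0 0 0 0 0 0 0), (M3 0 1 0 0 0 1 0 0 0), (M3 (-1) 0 1 (-1) 0 0 (-1) 0 1))"]) (simp_all add: evsimps)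

lemma case15: "\<not> separating TYPE('a::field_char_0) (P33 - {[1,2,3]})"
  by (rule not_sep_L[where u="((M3 0 1 0 0 0 1 0 0 0), (M3 0 (-1) 0 0 0 0 (-1) (-1) 0), (M3 0 0 0 0 0 0 0 0 0)) :: 'a triple" and v="((M3 0 1 0 0 0 1 0 0 0), (M3 0 (-1) 0 0 0 0 (-1) (-1) 0), (M3 0 (-1) 0 0 0 0 0 0 0))"]) (simp_all add: evsimps)

lemma case16: "\<not> separating TYPE('a::field_char_0) (P33 - {[1,3,2]})"
  by (rule not_sep_L[where u="((M3 0 1 0 0 0 1 0 0 0), (M3 0 0 0 0 0 0 0 0 0), (M3 0 1 0 0 0 0 (-1) 1 0)) :: 'a triple" and v="((M3 0 1 0 0 0 1 0 0 0), (M3 0 1 0 0 0 0 0 0 0), (M3 0 1 0 0 0 0 (-1) 1 0))"]) (simp_all add: evsimps)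

lemma case17: "\<not> separating TYPE('a::field_char_0) (P33 - {[1,1,2,3]})"
  by (rule not_sep_L[where u="((M3 0 1 0 0 0 1 0 0 0), (M3 0 (-1) 0 0 0 0 0 1 0), (M3 0 0 0 1 0 1 0 0 0)) :: 'a triple" and v="((M3 0 1 0 0 0 1 0 0 0), (M3 (-1) (-1) (-1) 1 1 (-1) 0 0 0), (M3 (-1) (-1) (-1) 1 1 (-1) 0 0 0))"]) (simp_all add: evsimps)

lemma case18: "\<not> separating TYPE('a::field_char_0) (P33 - {[1,1,3,2]})"
  by (rule not_sep_L[where u="((M3 0 1 0 0 0 1 0 0 0), (M3 (-1) (-1) (-1) 1 1 1 0 0 0), (M3 0 0 0 (-1) 0 0 1 0 0)) :: 'a triple" and v="((M3 0 1 0 0 0 1 0 0 0), (M3 0 0 0 1 0 (-1) 0 0 0), (M3 1 0 (-1) (-1) 0 1 1 0 (-1)))"]) (simp_all add: evsimps)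

lemma case19: "\<not> separating TYPE('a::field_char_0) (P33 - {[2,2,1,3]})"
  by (rule not_sep_L[where u="((M3 0 (-1) 0 0 0 0 0 1 0), (M3 0 1 0 0 0 1 0 0 0), (M3 0 0 0 1 0 1 0 0 0)) :: 'a triple" and v="((M3 (-1) (-1) (-1) 1 1 (-1) 0 0 0), (M3 0 1 0 0 0 1 0 0 0), (M3 (-1) (-1) (-1) 1 1 (-1) 0 0 0))"]) (simp_all add: evsimps)

lemma case20: "\<not> separating TYPE('a::field_char_0) (P33 - {[2,2,3,1]})"
  by (rule not_sep_L[where u="((M3 (-1) (-1) (-1) 1 1 1 0 0 0), (M3 0 1 0 0 0 1 0 0 0), (M3 0 0 0 (-1) 0 0 1 0 0)) :: 'a triple" and v="((M3 0 0 0 1 0 (-1) 0 0 0), (M3 0 1 0 0 0 1 0 0 0), (M3 1 0 (-1) (-1) 0 1 1 0 (-1)))"]) (simp_all add: evsimps)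

lemma case21: "\<not> separating TYPE('a::field_char_0) (P33 - {[3,3,1,2]})"
  by (rule not_sep_L[where u="((M3 0 (-1) 0 0 0 0 0 1 0), (M3 0 0 0 1 0 1 0 0 0), (M3 0 1 0 0 0 1 0 0 0)) :: 'a triple" and v="((M3 (-1) (-1) (-1) 1 1 (-1) 0 0 0), (M3 (-1) (-1) (-1) 1 1 (-1) 0 0 0), (M3 0 1 0 0 0 1 0 0 0))"]) (simp_all add: evsimps)

lemma case22: "\<not> separating TYPE('a::field_char_0) (P33 - {[3,3,2,1]})"
  by (rule not_sep_L[where u="((M3 (-1) (-1) (-1) 1 1 1 0 0 0), (M3 0 0 0 (-1) 0 0 1 0 0), (M3 0 1 0 0 0 1 0 0 0)) :: 'a triple" and v="((M3 0 0 0 1 0 (-1) 0 0 0), (M3 1 0 (-1) (-1) 0 1 1 0 (-1)), (M3 0 1 0 0 0 1 0 0 0))"]) (simp_all add: evsimps)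

lemma case23: "\<not> separating TYPE('a::field_char_0) (P33 - {[1,1,2,1,3]})"
  by (rule not_sep_L[where u="((M3 0 1 0 0 0 1 0 0 0), (M3 (-1) 0 (-1) 0 0 0 1 0 1), (M3 0 (-1) 0 0 0 0 0 1 0)) :: 'a triple" and v="((M3 0 1 0 0 0 1 0 0 0), (M3 (-1) 0 (-1) 0 0 0 1 0 1), (M3 0 0 0 1 0 1 0 0 0))"]) (simp_all add: evsimps)

lemma case24: "\<not> separating TYPE('a::field_char_0) (P33 - {[2,2,1,2,3]})"
  by (rule not_sep_L[where u="((M3 (-1) 0 (-1) 0 0 0 1 0 1), (M3 0 1 0 0 0 1 0 0 0), (M3 0 (-1) 0 0 0 0 0 1 0)) :: 'a triple" and v="((M3 (-1) 0 (-1) 0 0 0 1 0 1), (M3 0 1 0 0 0 1 0 0 0), (M3 0 0 0 1 0 1 0 0 0))"]) (simp_all add: evsimps)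

lemma case25: "\<not> separating TYPE('a::field_char_0) (P33 - {[3,3,1,3,2]})"
  by (rule not_sep_L[where u="((M3 (-1) 0 (-1) 0 0 0 1 0 1), (M3 0 (-1) 0 0 0 0 0 1 0), (M3 0 1 0 0 0 1 0 0 0)) :: 'a triple" and v="((M3 (-1) 0 (-1) 0 0 0 1 0 1), (M3 0 0 0 1 0 1 0 0 0), (M3 0 1 0 0 0 1 0 0 0))"]) (simp_all add: evsimps)


theorem lemma3p4:
  shows "(\<forall>f \<in> S33. \<not> separating TYPE('a::{alg_closed_field, field_char_0}) (P33 - {f}))
       \<and> (\<forall>W. W \<subset> S33 \<longrightarrow> \<not> separating TYPE('a) W)"
proof -
  have A: "\<forall>f \<in> S33. \<not> separating TYPE('a) (P33 - {f})"
  proof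
    fix f assume "f \<in> S33"
    hence "f \<in> set S33L" using S33_sub by blast
    hence "f = [1,2] \<or> f = [1,3] \<or> f = [2,3] \<or> f = [1,1,2] \<or> f = [1,1,3] \<or> f = [2,2,3] \<or> f = [1,2,2] \<or> f = [1,3,3] \<or> f = [2,3,3] \<or> f = [1,1,2,2] \<or> f = [1,1,3,3] \<or> f = [2,2,3,3] \<or> f = [1,1,2,2,1,2] \<or> f = [1,1,3,3,1,3] \<or> f = [2,2,3,3,2,3] \<or> f = [1,2,3] \<or> f = [1,3,2] \<or> f = [1,1,2,3] \<or> f = [1,1,3,2] \<or> f = [2,2,1,3] \<or> f = [2,2,3,1] \<or> f = [3,3,1,2] \<or> f = [3,3,2,1] \<or> f = [1,1,2,1,3] \<or> f = [2,2,1,2,3] \<or> f = [3,3,1,3,2]"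
      unfolding S33L_def by (simp only: list.set insert_iff empty_iff simp_thms)
    thus "\<not> separating TYPE('a) (P33 - {f})"
      by (elim disjE; simp only: not_False_eq_True case0 case1 case2 case3 case4 case5 case6 case7 case8 case9 case10 case11 case12 case13 case14 case15 case16 case17 case18 case19 case20 case21 case22 case23 case24 case25)
  qed
  have B: "\<forall>W. W \<subset> S33 \<longrightarrow> \<not> separating TYPE('a) W"
  proof (intro allI impI notI)
    fix W assume W: "W \<subset> S33" and sep: "separating TYPE('a) W"
    then obtain f where f: "f \<in> S33" "f \<notin> W" by blast
    have "W \<subseteq> P33 - {f}" using W f unfolding P33_def by blast
    hence "separating TYPE('a) (P33 - {f})" using separating_mono sep by blast
    thus False using A f by blast
  qed
  show ?thesis using A B by blast
qed

end
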